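(* The following are equivalent for any structures $\mathcal{M}$ and $\mathcal{N}$. (1) $\mathcal{N}$ locally trace defines $\mathcal{M}$. (2) For every $k\ge 2$, every $\mathcal{M}$-definable $k$-hypergraph embeds into an $\mathcal{N}$-definable $k$-hypergraph. (3) For every $k\ge 2$, every $k$-hypergraph that is zero-definable in $\mathcal{M}$ embeds into a $k$-hypergraph that is zero-definable in $\mathcal{N}$.
   Context: "Definable" means first-order definable with parameters; "zero-definable" means definable without parameters. A $k$-hypergraph is a set with a symmetric $k$-ary relation $E$ such that $E(a_1,\dots,a_k)$ implies the $a_i$ are distinct. An $\mathcal{M}$-definable $k$-hypergraph is one whose vertex set is an $\mathcal{M}$-definable set (a definable subset of some $M^d$) and whose relation is $\mathcal{M}$-definable; embeddings are injective maps preserving and reflecting the relation. $\mathcal{N}$ locally trace defines $\mathcal{M}$ if there is a possibly infinite collection $\mathcal{E}$ of functions $M\to N$ such that every $\mathcal{M}$-definable subset of every $M^m$ is of the form $\{(a_1,\dots,a_m) : (f_1(a_{i_1}),\dots,f_n(a_{i_n}))\in Y\}$ for some $f_1,\dots,f_n\in\mathcal{E}$, $i_1,\dots,i_n\in\{1,\dots,m\}$ and $\mathcal{N}$-definable $Y\subseteq N^n$. *)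

theory Defs
  imports Main "HOL-Library.Multiset"
begin

text \<open>A structure on the universe UNIV :: 'a is given by an interpretation
  R :: 'r => 'a list => bool of its (relation) symbols: R r xs says the
  tuple xs lies in the relation named r (of arity length xs).  Function and
  constant symbols are replaced by their graphs, which does not change the
  definable (or zero-definable) sets.\<close>

datatype 'r fm =
    Eq nat nat
  | Rel 'r "nat list"
  | Neg "'r fm"
  | Conj "'r fm" "'r fm"
  | Ex "'r fm"

text \<open>Satisfaction; variables are de Bruijn indices into the environment list;
  atoms mentioning an out-of-range variable are false.\<close>

fun sat :: "('r \<Rightarrow> 'a list \<Rightarrow> bool) \<Rightarrow> 'a list \<Rightarrow> 'r fm \<Rightarrow> bool" where
  "sat R e (Eq i j) = (i < length e \<and> j < length e \<and> e ! i = e ! j)"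
| "sat R e (Rel r is) = ((\<forall>i\<in>set is. i < length e) \<and> R r (map (\<lambda>i. e ! i) is))"
| "sat R e (Neg \<phi>) = (\<not> sat R e \<phi>)"
| "sat R e (Conj \<phi> \<psi>) = (sat R e \<phi> \<and> sat R e \<psi>)"
| "sat R e (Ex \<phi>) = (\<exists>x. sat R (x # e) \<phi>)"

definition definable :: "('r \<Rightarrow> 'a list \<Rightarrow> bool) \<Rightarrow> nat \<Rightarrow> 'a list set \<Rightarrow> bool" where
  "definable R m X \<longleftrightarrow>
     (\<exists>\<phi> (b :: 'a list). X = {xs. length xs = m \<and> sat R (xs @ b) \<phi>})"

definition zero_definable :: "('r \<Rightarrow> 'a list \<Rightarrow> bool) \<Rightarrow> nat \<Rightarrow> 'a list set \<Rightarrow> bool" where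
  "zero_definable R m X \<longleftrightarrow>
     (\<exists>\<phi>. X = {xs. length xs = m \<and> sat R xs \<phi>})"

definition hypergraph :: "nat \<Rightarrow> 'v set \<Rightarrow> 'v list set \<Rightarrow> bool" where
  "hypergraph k V E \<longleftrightarrow>
     (\<forall>vs\<in>E. length vs = k \<and> set vs \<subseteq> V \<and> distinct vs) \<and>
     (\<forall>vs ws. length vs = k \<longrightarrow> set vs \<subseteq> V \<longrightarrow> mset vs = mset ws \<longrightarrow>
        (vs \<in> E \<longleftrightarrow> ws \<in> E))"

text \<open>Definable k-hypergraph: vertex set a definable subset of M^d, and
  the k-ary relation a definable subset of (M^d)^k = M^(d*k).\<close>
definition def_hypergraph ::
  "('r \<Rightarrow> 'a list \<Rightarrow> bool) \<Rightarrow> nat \<Rightarrow> nat \<Rightarrow> 'a list set \<Rightarrow> 'a list list set \<Rightarrow> bool" where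
  "def_hypergraph R k d V E \<longleftrightarrow>
     hypergraph k V E \<and> V \<subseteq> {xs. length xs = d} \<and>
     definable R d V \<and> definable R (d * k) (concat ` E)"

definition zero_def_hypergraph ::
  "('r \<Rightarrow> 'a list \<Rightarrow> bool) \<Rightarrow> nat \<Rightarrow> nat \<Rightarrow> 'a list set \<Rightarrow> 'a list list set \<Rightarrow> bool" where
  "zero_def_hypergraph R k d V E \<longleftrightarrow>
     hypergraph k V E \<and> V \<subseteq> {xs. length xs = d} \<and>
     zero_definable R d V \<and> zero_definable R (d * k) (concat ` E)"

definition hg_embedding :: "nat \<Rightarrow> ('v \<Rightarrow> 'w) \<Rightarrow> 'v set \<Rightarrow> 'v list set \<Rightarrow> 'w set \<Rightarrow> 'w list set \<Rightarrow> bool" where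
  "hg_embedding k f V E W F \<longleftrightarrow>
     f ` V \<subseteq> W \<and> inj_on f V \<and>
     (\<forall>vs. length vs = k \<longrightarrow> set vs \<subseteq> V \<longrightarrow> (vs \<in> E \<longleftrightarrow> map f vs \<in> F))"

definition locally_trace_defines ::
  "('s \<Rightarrow> 'b list \<Rightarrow> bool) \<Rightarrow> ('r \<Rightarrow> 'a list \<Rightarrow> bool) \<Rightarrow> bool" where
  "locally_trace_defines RN RM \<longleftrightarrow>
     (\<exists>\<E> :: ('a \<Rightarrow> 'b) set. \<forall>m X. definable RM m X \<longrightarrow>
        (\<exists>fs idx Y. length idx = length fs \<and> set fs \<subseteq> \<E> \<and> (\<forall>i\<in>set idx. i < m) \<and>
           definable RN (length fs) Y \<and>
           X = {as. length as = m \<and> map2 (\<lambda>f i. f (as ! i)) fs idx \<in> Y}))"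

end

theory Submission
  imports Defs "HOL-Combinatorics.Permutations"
begin

definition zdp :: "('r \<Rightarrow> 'a list \<Rightarrow> bool) \<Rightarrow> nat \<Rightarrow> ('a list \<Rightarrow> bool) \<Rightarrow> bool" where
  "zdp R m P \<longleftrightarrow> (\<exists>\<phi>. \<forall>xs. length xs = m \<longrightarrow> (P xs \<longleftrightarrow> sat R xs \<phi>))"

lemma zdp_zero_definable: "zdp R m P \<Longrightarrow> zero_definable R m {xs. length xs = m \<and> P xs}"
  unfolding zdp_def zero_definable_def by (auto)

lemma zero_definable_zdp: "zero_definable R m X \<Longrightarrow> zdp R m (\<lambda>xs. xs \<in> X)"
  unfolding zdp_def zero_definable_def by auto

lemma zero_definable_definable: "zero_definable R m X \<Longrightarrow> definable R m X"
proof -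
  assume "zero_definable R m X"
  then obtain \<phi> where "X = {xs. length xs = m \<and> sat R xs \<phi>}" unfolding zero_definable_def by blast
  then show ?thesis unfolding definable_def by (intro exI[of _ \<phi>] exI[of _ "[]"]) simp
qed

lemma zdp_cong: "zdp R m P \<Longrightarrow> (\<And>xs. length xs = m \<Longrightarrow> P xs \<longleftrightarrow> Q xs) \<Longrightarrow> zdp R m Q"
  unfolding zdp_def by metis

lemma zdp_true: "zdp R m (\<lambda>_. True)"
  unfolding zdp_def by (rule exI[of _ "Neg (Conj (Eq 0 0) (Neg (Eq 0 0)))"]) auto

lemma zdp_not: "zdp R m P \<Longrightarrow> zdp R m (\<lambda>xs. \<not> P xs)"
  unfolding zdp_def by (metis sat.simps(3))

lemma zdp_false: "zdp R m (\<lambda>_. False)"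
  using zdp_not[OF zdp_true] by simp

lemma zdp_and: "zdp R m P \<Longrightarrow> zdp R m Q \<Longrightarrow> zdp R m (\<lambda>xs. P xs \<and> Q xs)"
  unfolding zdp_def by (metis sat.simps(4))

lemma zdp_or: "zdp R m P \<Longrightarrow> zdp R m Q \<Longrightarrow> zdp R m (\<lambda>xs. P xs \<or> Q xs)"
  using zdp_not[OF zdp_and[OF zdp_not zdp_not], of R m P Q] by simp

lemma zdp_imp: "zdp R m P \<Longrightarrow> zdp R m Q \<Longrightarrow> zdp R m (\<lambda>xs. P xs \<longrightarrow> Q xs)"
  using zdp_or[OF zdp_not, of R m P Q] by simp

lemma zdp_iff: "zdp R m P \<Longrightarrow> zdp R m Q \<Longrightarrow> zdp R m (\<lambda>xs. P xs \<longleftrightarrow> Q xs)"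
  using zdp_and[OF zdp_imp zdp_imp, of R m P Q Q P] by (simp add: iff_conv_conj_imp)

lemma zdp_neq: "zdp R m P \<Longrightarrow> zdp R m Q \<Longrightarrow> zdp R m (\<lambda>xs. P xs \<noteq> Q xs)"
  using zdp_not[OF zdp_iff, of R m P Q] by simp

lemma zdp_all:
  assumes "finite I" "\<And>i. i \<in> I \<Longrightarrow> zdp R m (P i)"
  shows "zdp R m (\<lambda>xs. \<forall>i\<in>I. P i xs)"
  using assms
proof (induction I rule: finite_induct)
  case empty then show ?case by (simp add: zdp_true)
next
  case (insert x F)
  then show ?case using zdp_and[of R m "P x" "\<lambda>xs. \<forall>i\<in>F. P i xs"] by simp
qed

lemma zdp_ex:
  assumes "finite I" "\<And>i. i \<in> I \<Longrightarrow> zdp R m (P i)"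
  shows "zdp R m (\<lambda>xs. \<exists>i\<in>I. P i xs)"
  using assms
proof (induction I rule: finite_induct)
  case empty then show ?case by (simp add: zdp_false)
next
  case (insert x F)
  then show ?case using zdp_or[of R m "P x" "\<lambda>xs. \<exists>i\<in>F. P i xs"] by simp
qed

lemma zdp_all_lt: assumes "\<And>i. i < (n::nat) \<Longrightarrow> zdp R m (P i)" shows "zdp R m (\<lambda>xs. \<forall>i<n. P i xs)"
proof -
  have "zdp R m (\<lambda>xs. \<forall>i\<in>{..<n}. P i xs)" by (rule zdp_all) (simp_all add: assms)
  then show ?thesis by (rule zdp_cong) auto
qed

lemma zdp_ex_lt: assumes "\<And>i. i < (n::nat) \<Longrightarrow> zdp R m (P i)" shows "zdp R m (\<lambda>xs. \<exists>i<n. P i xs)"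
proof -
  have "zdp R m (\<lambda>xs. \<exists>i\<in>{..<n}. P i xs)" by (rule zdp_ex) (simp_all add: assms)
  then show ?thesis by (rule zdp_cong) auto
qed

lemma zdp_eq: "i < m \<Longrightarrow> j < m \<Longrightarrow> zdp R m (\<lambda>xs. xs ! i = xs ! j)"
  unfolding zdp_def by (rule exI[of _ "Eq i j"]) auto

lemma zdp_Ex1: "zdp R (Suc m) P \<Longrightarrow> zdp R m (\<lambda>xs. \<exists>x. P (x # xs))"
  unfolding zdp_def
proof (elim exE)
  fix \<phi> assume h: "\<forall>xs. length xs = Suc m \<longrightarrow> P xs = sat R xs \<phi>"
  show "\<exists>\<phi>. \<forall>xs. length xs = m \<longrightarrow> (\<exists>x. P (x # xs)) = sat R xs \<phi>"
    by (rule exI[of _ "Ex \<phi>"]) (use h in auto)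
qed

lemma zdp_proj: "zdp R (n + m) P \<Longrightarrow> zdp R m (\<lambda>xs. \<exists>ys. length ys = n \<and> P (ys @ xs))"
proof (induction n arbitrary: P)
  case 0
  then show ?case by (simp add: zdp_def)
next
  case (Suc n)
  have "zdp R (n + m) (\<lambda>xs. \<exists>x. P (x # xs))" using zdp_Ex1[of R "n+m" P] Suc.prems by simp
  from Suc.IH[OF this] have "zdp R m (\<lambda>xs. \<exists>ys. length ys = n \<and> (\<exists>x. P (x # ys @ xs)))" by simp
  then show ?case
    by (rule zdp_cong) (auto simp: length_Suc_conv; metis append_Cons)
qed

fun ren :: "(nat \<Rightarrow> nat) \<Rightarrow> 'r fm \<Rightarrow> 'r fm" where
  "ren \<rho> (Eq i j) = Eq (\<rho> i) (\<rho> j)"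
| "ren \<rho> (Rel r is) = Rel r (map \<rho> is)"
| "ren \<rho> (Neg \<phi>) = Neg (ren \<rho> \<phi>)"
| "ren \<rho> (Conj \<phi> \<psi>) = Conj (ren \<rho> \<phi>) (ren \<rho> \<psi>)"
| "ren \<rho> (Ex \<phi>) = Ex (ren (\<lambda>i. case i of 0 \<Rightarrow> 0 | Suc j \<Rightarrow> Suc (\<rho> j)) \<phi>)"

lemma sat_ren:
  assumes "\<And>i. i < n \<longleftrightarrow> \<rho> i < length e"
  shows "sat R e (ren \<rho> \<phi>) = sat R (map (\<lambda>i. e ! \<rho> i) [0..<n]) \<phi>"
  using assms
proof (induction \<phi> arbitrary: \<rho> n e)
  case (Eq i j)
  have a: "i < n \<longleftrightarrow> \<rho> i < length e" "j < n \<longleftrightarrow> \<rho> j < length e" using Eq by blast+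
  show ?case
  proof (cases "i < n \<and> j < n")
    case True with a show ?thesis by simp
  next
    case False with a show ?thesis by auto
  qed
next
  case (Rel r ids)
  have b: "(\<forall>i\<in>set ids. \<rho> i < length e) = (\<forall>i\<in>set ids. i < n)" using Rel by blast
  have c: "map (\<lambda>i. e ! i) (map \<rho> ids) = map (\<lambda>i. map (\<lambda>i. e ! \<rho> i) [0..<n] ! i) ids"
    if "\<forall>i\<in>set ids. i < n" using that by auto
  show ?case
  proof (cases "\<forall>i\<in>set ids. i < n")
    case True
    have "sat R e (ren \<rho> (Rel r ids)) = ((\<forall>i\<in>set ids. \<rho> i < length e) \<and> R r (map (\<lambda>i. e ! i) (map \<rho> ids)))"
      by simp
    also have "\<dots> = ((\<forall>i\<in>set ids. i < n) \<and> R r (map (\<lambda>i. map (\<lambda>i. e ! \<rho> i) [0..<n] ! i) ids))"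
      by (simp only: b c[OF True])
    finally show ?thesis by simp
  next
    case False then show ?thesis using b by auto
  qed
next
  case (Ex \<phi>)
  let ?l = "\<lambda>i. case i of 0 \<Rightarrow> 0 | Suc j \<Rightarrow> Suc (\<rho> j)"
  have c: "i < Suc n \<longleftrightarrow> ?l i < length (x # e)" for i x
    using Ex.prems by (cases i) auto
  have m: "map (\<lambda>i. (x # e) ! ?l i) [0..<Suc n] = x # map (\<lambda>i. e ! \<rho> i) [0..<n]" for x
    by (simp add: map_upt_Suc del: upt_Suc)
  show ?case using Ex.IH[OF c] m by simp
next
  case (Neg \<phi>) show ?case using Neg.IH[OF Neg.prems] by simp
next
  case (Conj \<phi> \<psi>) show ?case using Conj.IH(1)[OF Conj.prems] Conj.IH(2)[OF Conj.prems] by simp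
qed

lemma zdp_pull:
  assumes "zdp R n P" "\<And>i. i < n \<Longrightarrow> \<rho> i < m"
  shows "zdp R m (\<lambda>xs. P (map (\<lambda>i. xs ! \<rho> i) [0..<n]))"
proof -
  obtain \<phi> where h: "\<And>ys. length ys = n \<Longrightarrow> P ys = sat R ys \<phi>" using assms(1) unfolding zdp_def by blast
  define \<rho>' where "\<rho>' i = (if i < n then \<rho> i else m + i)" for i
  have "sat R xs (ren \<rho>' \<phi>) = P (map (\<lambda>i. xs ! \<rho> i) [0..<n])" if "length xs = m" for xs
  proof -
    have "sat R xs (ren \<rho>' \<phi>) = sat R (map (\<lambda>i. xs ! \<rho>' i) [0..<n]) \<phi>"
      by (rule sat_ren) (use assms(2) that in \<open>auto simp: \<rho>'_def\<close>)
    also have "map (\<lambda>i. xs ! \<rho>' i) [0..<n] = map (\<lambda>i. xs ! \<rho> i) [0..<n]" by (simp add: \<rho>'_def)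
    finally show ?thesis using h by simp
  qed
  then show ?thesis unfolding zdp_def by metis
qed

lemma zdp_const: "zdp R m (\<lambda>_. c)"
  by (cases c) (simp_all add: zdp_true zdp_false)

lemma zdp_sat: "zdp R m (\<lambda>xs. sat R xs \<phi>)"
  unfolding zdp_def by blast

lemma length_concat_unif: "(\<forall>v\<in>set vs. length v = d) \<Longrightarrow> length (concat vs) = d * length vs"
  by (induction vs) auto

lemma nth_concat_unif:
  "(\<forall>v\<in>set vs. length v = d) \<Longrightarrow> j < length vs \<Longrightarrow> t < d \<Longrightarrow> concat vs ! (j * d + t) = vs ! j ! t"
proof (induction vs arbitrary: j)
  case Nil then show ?case by simp
next
  case (Cons v vs)
  show ?case
  proof (cases j)
    case 0 then show ?thesis using Cons.prems by (simp add: nth_append)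
  next
    case (Suc j')
    have "concat (v # vs) ! (j * d + t) = concat vs ! (j' * d + t)"
      using Cons.prems Suc by (simp add: nth_append add.assoc)
    then show ?thesis using Cons Suc by simp
  qed
qed

lemma concat_inj_unif:
  "(\<forall>v\<in>set vs. length v = d) \<Longrightarrow> (\<forall>v\<in>set ws. length v = d) \<Longrightarrow> length vs = length ws
   \<Longrightarrow> concat vs = concat ws \<Longrightarrow> vs = ws"
proof (induction vs arbitrary: ws)
  case Nil then show ?case by simp
next
  case (Cons v vs)
  obtain w ws' where ws: "ws = w # ws'" using Cons.prems(3) by (cases ws) simp_all
  have e: "v @ concat vs = w @ concat ws'" using Cons.prems(4) ws by simp
  have l: "length v = length w" using Cons.prems(1,2) ws by simp
  from append_eq_append_conv[of v w "concat vs" "concat ws'"] e l have "v = w" "concat vs = concat ws'" by blast+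
  moreover have "vs = ws'"
    using Cons.prems(1,2,3) ws \<open>concat vs = concat ws'\<close> by (intro Cons.IH) simp_all
  ultimately show ?case using ws by simp
qed

lemma chunks_exist:
  "length zs = d * k \<Longrightarrow> \<exists>vs. length vs = k \<and> (\<forall>v\<in>set vs. length v = d) \<and> concat vs = zs"
proof (induction k arbitrary: zs)
  case 0 then show ?case by simp
next
  case (Suc k)
  from Suc.prems have "length (drop d zs) = d * k" by simp
  from Suc.IH[OF this] obtain vs where "length vs = k" "\<forall>v\<in>set vs. length v = d" "concat vs = drop d zs" by blast
  then show ?case using Suc.prems
    by (intro exI[of _ "take d zs # vs"]) auto
qed

lemma idx_bound: "j < k \<Longrightarrow> t < (d::nat) \<Longrightarrow> j * d + t < d * k"
proof -
  assume a: "j < k" "t < d"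
  then have "j * d + t < (j + 1) * d" by simp
  also have "\<dots> \<le> k * d" using a by (intro mult_le_mono1) simp
  finally show ?thesis by (simp add: mult.commute)
qed

lemma divmod_bound: "t < d * k \<Longrightarrow> t div d < k \<and> t mod (d::nat) < d \<and> t = t div d * d + t mod d"
  by (metis div_less_iff_less_mult mod_less_divisor mult.commute mult_0 not_less0 div_mult_mod_eq gr0I)


definition sortp :: "nat \<Rightarrow> nat \<Rightarrow> 'a list \<Rightarrow> bool" where
  "sortp K i v \<longleftrightarrow> (\<forall>j<K. (v ! Suc (Suc j) \<noteq> v ! 1) = (j = i))"

definition BV :: "nat \<Rightarrow> nat \<Rightarrow> 'a list set" where
  "BV K p = {v. length v = K + 2 + p \<and> (\<exists>i<K. sortp K i v)}"

definition BE :: "('r \<Rightarrow> 'a list \<Rightarrow> bool) \<Rightarrow> 'r fm \<Rightarrow> nat \<Rightarrow> nat \<Rightarrow> nat \<Rightarrow> 'a list list set" where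
  "BE R \<phi> m K p = {vs. length vs = K \<and> set vs \<subseteq> BV K p \<and> (\<forall>i<K. \<exists>v\<in>set vs. sortp K i v) \<and>
     (\<exists>xs c. length xs = K \<and> length c = p \<and> (\<forall>i<K. \<forall>v\<in>set vs. sortp K i v \<longrightarrow> xs ! i = v ! 0) \<and>
        (\<forall>v\<in>set vs. drop (K + 2) v = c) \<and> sat R (take m xs @ c) \<phi>)}"

lemma sortp_unique: assumes "sortp K i v" "sortp K i' v" "i < K" "i' < K" shows "i = i'"
proof -
  from assms(1,3) have "v ! Suc (Suc i) \<noteq> v ! 1" unfolding sortp_def by blast
  with assms(2,3) show ?thesis unfolding sortp_def by blast
qed

lemma BE_distinct:
  assumes "vs \<in> BE R \<phi> m K p" shows "distinct vs"
proof -
  from assms have len: "length vs = K" and cov: "\<forall>i<K. \<exists>v\<in>set vs. sortp K i v"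
    by (auto simp: BE_def)
  define g where "g i = (SOME v. v \<in> set vs \<and> sortp K i v)" for i
  have g: "g i \<in> set vs \<and> sortp K i (g i)" if "i < K" for i
  proof -
    from cov that obtain v where "v \<in> set vs \<and> sortp K i v" by blast
    then show ?thesis unfolding g_def by (rule someI)
  qed
  have "inj_on g {..<K}"
  proof (rule inj_onI)
    fix i i' assume "i \<in> {..<K}" "i' \<in> {..<K}" "g i = g i'"
    then show "i = i'" using g[of i] g[of i'] sortp_unique[of K i "g i" i'] by simp
  qed
  moreover have "g ` {..<K} \<subseteq> set vs" using g by auto
  ultimately have "card {..<K} \<le> card (set vs)" by (metis card_inj_on_le finite_set)
  then have "card (set vs) = length vs" using len card_length[of vs] by simp
  then show ?thesis by (rule card_distinct)
qed

lemma BE_hypergraph: "hypergraph K (BV K p) (BE R \<phi> m K p)"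
  unfolding hypergraph_def
proof (intro conjI ballI allI impI)
  fix vs assume a: "vs \<in> BE R \<phi> m K p"
  then show "length vs = K" "set vs \<subseteq> BV K p"
    by (auto simp: BE_def)
  show "distinct vs" using a by (rule BE_distinct)
next
  fix vs ws :: "'a list list"
  assume "length vs = K" "mset vs = mset ws"
  then have "set vs = set ws" "length vs = length ws"
    by (metis mset_eq_setD, metis mset_eq_length)
  then show "vs \<in> BE R \<phi> m K p \<longleftrightarrow> ws \<in> BE R \<phi> m K p"
    unfolding BE_def by simp
qed

lemma BV_zd: "zero_definable R (K + 2 + p) (BV K p)"
proof -
  have "zdp R (K + 2 + p) (\<lambda>v. \<exists>i<K. \<forall>j<K. (v ! Suc (Suc j) \<noteq> v ! 1) = (j = i))"
    apply (rule zdp_ex_lt)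
    apply (rule zdp_all_lt)
    apply (rule zdp_iff)
    apply (rule zdp_not)
    apply (rule zdp_eq)
    apply simp
    apply simp
    apply (rule zdp_const)
    done
  from zdp_zero_definable[OF this] show ?thesis
    unfolding BV_def sortp_def .
qed

lemma ib: "j < K \<Longrightarrow> x < (d::nat) \<Longrightarrow> a + j * d + x < a + d * K"
  using idx_bound[of j K x d] by simp

lemma BE_Z_zdp:
  fixes R :: "'r \<Rightarrow> 'a list \<Rightarrow> bool"
  assumes "m \<le> K" "d = K + 2 + p"
  shows "zdp R (K + p + d * K) (\<lambda>w.
     (\<forall>j<K. \<exists>i<K. \<forall>j'<K. (w ! (K + p + j * d + Suc (Suc j')) \<noteq> w ! (K + p + j * d + 1)) = (j' = i)) \<and>
     (\<forall>i<K. \<exists>j<K. \<forall>j'<K. (w ! (K + p + j * d + Suc (Suc j')) \<noteq> w ! (K + p + j * d + 1)) = (j' = i)) \<and>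
     (\<forall>i<K. \<forall>j<K. (\<forall>j'<K. (w ! (K + p + j * d + Suc (Suc j')) \<noteq> w ! (K + p + j * d + 1)) = (j' = i))
          \<longrightarrow> w ! i = w ! (K + p + j * d + 0)) \<and>
     (\<forall>j<K. \<forall>t<p. w ! (K + p + j * d + (K + 2 + t)) = w ! (K + t)) \<and>
     sat R (map (\<lambda>i. w ! (if i < m then i else K + (i - m))) [0..<m + p]) \<phi>)"
  apply (intro zdp_and zdp_ex_lt zdp_all_lt zdp_iff zdp_not zdp_const zdp_imp)
  apply (rule zdp_eq; ((rule ib; simp add: assms(2)) | simp))+
  apply (rule zdp_pull[OF zdp_sat])
  using assms(1) by auto

definition Zg :: "('r \<Rightarrow> 'a list \<Rightarrow> bool) \<Rightarrow> 'r fm \<Rightarrow> nat \<Rightarrow> nat \<Rightarrow> nat \<Rightarrow> 'a list \<Rightarrow> 'a list list \<Rightarrow> bool" where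
  "Zg R \<phi> m K p ys vs \<longleftrightarrow> (\<forall>j<K. \<exists>i<K. sortp K i (vs ! j)) \<and> (\<forall>i<K. \<exists>j<K. sortp K i (vs ! j)) \<and>
     (\<forall>i<K. \<forall>j<K. sortp K i (vs ! j) \<longrightarrow> ys ! i = vs ! j ! 0) \<and>
     (\<forall>j<K. \<forall>t<p. vs ! j ! (K + 2 + t) = ys ! (K + t)) \<and> sat R (take m ys @ drop K ys) \<phi>"

lemma Z_iff:
  fixes R :: "'r \<Rightarrow> 'a list \<Rightarrow> bool"
  assumes "m \<le> K" "d = K + 2 + p" "length ys = K + p" "length vs = K" "\<forall>v\<in>set vs. length v = d"
    and w: "w = ys @ concat vs"
  shows "((\<forall>j<K. \<exists>i<K. \<forall>j'<K. (w ! (K + p + j * d + Suc (Suc j')) \<noteq> w ! (K + p + j * d + 1)) = (j' = i)) \<and>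
     (\<forall>i<K. \<exists>j<K. \<forall>j'<K. (w ! (K + p + j * d + Suc (Suc j')) \<noteq> w ! (K + p + j * d + 1)) = (j' = i)) \<and>
     (\<forall>i<K. \<forall>j<K. (\<forall>j'<K. (w ! (K + p + j * d + Suc (Suc j')) \<noteq> w ! (K + p + j * d + 1)) = (j' = i))
          \<longrightarrow> w ! i = w ! (K + p + j * d + 0)) \<and>
     (\<forall>j<K. \<forall>t<p. w ! (K + p + j * d + (K + 2 + t)) = w ! (K + t)) \<and>
     sat R (map (\<lambda>i. w ! (if i < m then i else K + (i - m))) [0..<m + p]) \<phi>)
   \<longleftrightarrow> Zg R \<phi> m K p ys vs"
proof -
  have acc: "w ! (K + p + j * d + t) = vs ! j ! t" if "j < K" "t < d" for j t
  proof -
    have "w ! (K + p + j * d + t) = concat vs ! (j * d + t)"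
      using assms(3) w by (simp add: nth_append add.assoc)
    also have "\<dots> = vs ! j ! t" using nth_concat_unif[OF assms(5)] that assms(4) by simp
    finally show ?thesis .
  qed
  have acc1: "w ! (K + p + j * d + Suc (Suc j')) = vs ! j ! Suc (Suc j')" if "j < K" "j' < K" for j j'
    using acc[of j "Suc (Suc j')"] that assms(2) by simp
  have acc2: "w ! (K + p + j * d + 1) = vs ! j ! 1" if "j < K" for j
    using acc[of j 1] that assms(2) by simp
  have acc3: "w ! (K + p + j * d + 0) = vs ! j ! 0" if "j < K" for j
    using acc[of j 0] that assms(2) by simp
  have acc4: "w ! (K + p + j * d + (K + 2 + t)) = vs ! j ! (K + 2 + t)" if "j < K" "t < p" for j t
    using acc[of j "K + 2 + t"] that assms(2) by simp
  have acc0: "w ! i = ys ! i" if "i < K" for i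
    using that assms(3) w by (simp add: nth_append)
  have acc5: "w ! (K + t) = ys ! (K + t)" if "t < p" for t
    using that assms(3) w by (simp add: nth_append)
  have mp: "map (\<lambda>i. w ! (if i < m then i else K + (i - m))) [0..<m + p] = take m ys @ drop K ys"
    by (rule nth_equalityI) (use assms(1,3) in \<open>auto simp: nth_append w\<close>)
  show ?thesis
    unfolding Zg_def sortp_def mp
    by (simp only: acc0 acc1 acc2 acc3 acc4 acc5 cong: imp_cong conj_cong)
qed

lemma drop_eq_nth: "length v = a + p \<Longrightarrow> length c = p \<Longrightarrow> (drop a v = c) \<longleftrightarrow> (\<forall>t<p. v ! (a + t) = c ! t)"
  by (auto simp: list_eq_iff_nth_eq)

lemma BE_iff:
  assumes "m \<le> K" "length vs = K" "\<forall>v\<in>set vs. length v = K + 2 + p"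
  shows "vs \<in> BE R \<phi> m K p \<longleftrightarrow> (\<exists>ys. length ys = K + p \<and> Zg R \<phi> m K p ys vs)"
proof -
  have lj: "length (vs ! j) = K + 2 + p" if "j < K" for j using assms(2,3) that by simp
  have sub: "set vs \<subseteq> BV K p \<longleftrightarrow> (\<forall>j<K. \<exists>i<K. sortp K i (vs ! j))"
    using assms(2,3) unfolding BV_def by (auto simp: all_set_conv_all_nth subset_code(1))
  have cov: "(\<forall>i<K. \<exists>v\<in>set vs. sortp K i v) \<longleftrightarrow> (\<forall>i<K. \<exists>j<K. sortp K i (vs ! j))"
    using assms(2) unfolding Bex_def in_set_conv_nth by blast
  show ?thesis
  proof
    assume "vs \<in> BE R \<phi> m K p"
    then obtain xs c where h: "set vs \<subseteq> BV K p" "\<forall>i<K. \<exists>v\<in>set vs. sortp K i v" "length xs = K" "length c = p"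
      "\<forall>i<K. \<forall>v\<in>set vs. sortp K i v \<longrightarrow> xs ! i = v ! 0" "\<forall>v\<in>set vs. drop (K + 2) v = c"
      "sat R (take m xs @ c) \<phi>" unfolding BE_def by blast
    have a1: "\<forall>j<K. \<exists>i<K. sortp K i (vs ! j)" using h(1) sub by blast
    have a2: "\<forall>i<K. \<exists>j<K. sortp K i (vs ! j)" using h(2) cov by blast
    have a3: "\<forall>i<K. \<forall>j<K. sortp K i (vs ! j) \<longrightarrow> (xs @ c) ! i = vs ! j ! 0"
    proof (intro allI impI)
      fix i j assume "i < K" "j < K" "sortp K i (vs ! j)"
      then show "(xs @ c) ! i = vs ! j ! 0" using h(3,5) assms(2) by (simp add: nth_append)
    qed
    have a4: "\<forall>j<K. \<forall>t<p. vs ! j ! (K + 2 + t) = (xs @ c) ! (K + t)"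
    proof (intro allI impI)
      fix j t assume "j < K" "t < p"
      then have "drop (K + 2) (vs ! j) = c" using h(6) assms(2) by simp
      then have "vs ! j ! (K + 2 + t) = c ! t" using drop_eq_nth[OF lj[OF \<open>j < K\<close>] h(4)] \<open>t < p\<close> by blast
      then show "vs ! j ! (K + 2 + t) = (xs @ c) ! (K + t)" using h(3) by (simp add: nth_append)
    qed
    have a5: "sat R (take m (xs @ c) @ drop K (xs @ c)) \<phi>" using h(3,7) assms(1) by simp
    have "Zg R \<phi> m K p (xs @ c) vs"
      unfolding Zg_def using a1 a2 a3 a4 a5 by blast
    then show "\<exists>ys. length ys = K + p \<and> Zg R \<phi> m K p ys vs" using h(3,4) by (intro exI[of _ "xs @ c"]) simp
  next
    assume "\<exists>ys. length ys = K + p \<and> Zg R \<phi> m K p ys vs"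
    then obtain ys where ys: "length ys = K + p" and z: "Zg R \<phi> m K p ys vs" by blast
    define xs where "xs = take K ys"
    define c where "c = drop K ys"
    have lx: "length xs = K" and lc: "length c = p" using ys by (simp_all add: xs_def c_def)
    have tm: "take m xs = take m ys" using assms(1) by (simp add: xs_def min_def)
    have z1: "\<forall>j<K. \<exists>i<K. sortp K i (vs ! j)" and z2: "\<forall>i<K. \<exists>j<K. sortp K i (vs ! j)"
      and z3: "\<forall>i<K. \<forall>j<K. sortp K i (vs ! j) \<longrightarrow> ys ! i = vs ! j ! 0"
      and z4: "\<forall>j<K. \<forall>t<p. vs ! j ! (K + 2 + t) = ys ! (K + t)"
      and z5: "sat R (take m ys @ drop K ys) \<phi>" using z unfolding Zg_def by blast+
    have "(\<forall>i<K. \<forall>v\<in>set vs. sortp K i v \<longrightarrow> xs ! i = v ! 0)"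
      using z3 assms(2) by (auto simp: in_set_conv_nth xs_def)
    moreover have "\<forall>v\<in>set vs. drop (K + 2) v = c"
    proof
      fix v assume "v \<in> set vs"
      then obtain j where j: "j < K" "v = vs ! j" using assms(2) by (auto simp: in_set_conv_nth)
      show "drop (K + 2) v = c"
        unfolding drop_eq_nth[OF lj[OF j(1)] lc, folded j(2)] using z4 j ys by (simp add: c_def)
    qed
    ultimately have ex: "\<exists>xs c. length xs = K \<and> length c = p \<and> (\<forall>i<K. \<forall>v\<in>set vs. sortp K i v \<longrightarrow> xs ! i = v ! 0) \<and>
        (\<forall>v\<in>set vs. drop (K + 2) v = c) \<and> sat R (take m xs @ c) \<phi>"
      using lx lc z5 tm by (intro exI[of _ xs] exI[of _ c]) (simp add: c_def)
    show "vs \<in> BE R \<phi> m K p"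
      unfolding BE_def mem_Collect_eq using assms(2) sub z1 cov z2 ex by blast
  qed
qed

lemma ex_conj_cong: "(\<And>y. P y \<Longrightarrow> Q y \<longleftrightarrow> Q' y) \<Longrightarrow> (\<exists>y. P y \<and> Q y) \<longleftrightarrow> (\<exists>y. P y \<and> Q' y)"
  by blast

lemma BE_zd:
  fixes R :: "'r \<Rightarrow> 'a list \<Rightarrow> bool"
  assumes "m \<le> K"
  shows "zero_definable R ((K + 2 + p) * K) (concat ` BE R \<phi> m K p)"
proof -
  define d where "d = K + 2 + p"
  have BVl: "\<forall>v\<in>set vs. length v = d" if "vs \<in> BE R \<phi> m K p" for vs
    using that unfolding BE_def BV_def d_def by auto
  have BEl: "length vs = K" if "vs \<in> BE R \<phi> m K p" for vs
    using that unfolding BE_def by auto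
  define ch where "ch zs = (SOME vs. length vs = K \<and> (\<forall>v\<in>set vs. length v = d) \<and> concat vs = zs)" for zs :: "'a list"
  have chp: "length (ch zs) = K \<and> (\<forall>v\<in>set (ch zs). length v = d) \<and> concat (ch zs) = zs" if "length zs = d * K" for zs
    unfolding ch_def by (rule someI_ex[OF chunks_exist[OF that]])
  have key: "(\<exists>ys. length ys = K + p \<and> Zg R \<phi> m K p ys (ch zs)) \<longleftrightarrow> zs \<in> concat ` BE R \<phi> m K p"
    if lz: "length zs = d * K" for zs
  proof -
    note vs = chp[OF lz]
    have "zs \<in> concat ` BE R \<phi> m K p \<longleftrightarrow> ch zs \<in> BE R \<phi> m K p"
    proof
      assume "zs \<in> concat ` BE R \<phi> m K p"
      then obtain vs' where v1: "vs' \<in> BE R \<phi> m K p" and v2: "zs = concat vs'" by blast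
      have "vs' = ch zs"
        by (rule concat_inj_unif[OF BVl[OF v1]]) (use vs BEl[OF v1] v2 in simp_all)
      with v1 show "ch zs \<in> BE R \<phi> m K p" by simp
    qed (use vs in \<open>metis image_eqI\<close>)
    also have "\<dots> \<longleftrightarrow> (\<exists>ys. length ys = K + p \<and> Zg R \<phi> m K p ys (ch zs))"
    proof -
      have "\<forall>v\<in>set (ch zs). length v = K + 2 + p" using vs d_def by simp
      from BE_iff[OF assms _ this] vs show ?thesis by simp
    qed
    finally show ?thesis by simp
  qed
  have "zdp R (d * K) (\<lambda>zs. zs \<in> concat ` BE R \<phi> m K p)"
    apply (rule zdp_cong[OF zdp_proj[OF BE_Z_zdp[OF assms d_def, of R \<phi>]]])
    subgoal for zs
      apply (rule trans[OF ex_conj_cong[where Q' = "\<lambda>ys. Zg R \<phi> m K p ys (ch zs)"]])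
      subgoal for ys
        apply (rule Z_iff[OF assms d_def])
        using chp[of zs] by auto
      using key by simp
    done
  from zdp_zero_definable[OF this] have "zero_definable R (d * K) {zs. length zs = d * K \<and> zs \<in> concat ` BE R \<phi> m K p}" .
  moreover have "{zs. length zs = d * K \<and> zs \<in> concat ` BE R \<phi> m K p} = concat ` BE R \<phi> m K p"
    using length_concat_unif[OF BVl] BEl by auto
  ultimately show ?thesis by (simp add: d_def)
qed

definition rep :: "'a \<Rightarrow> 'a \<Rightarrow> nat \<Rightarrow> 'a list \<Rightarrow> nat \<Rightarrow> 'a \<Rightarrow> 'a list" where
  "rep u w K b i a = a # u # map (\<lambda>j. if j = i then w else u) [0..<K] @ b"

lemma rep_length: "length (rep u w K b i a) = K + 2 + length b"
  by (simp add: rep_def)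

lemma rep_sortp: assumes "u \<noteq> w" "i < K" "i' < K" shows "sortp K i' (rep u w K b i a) \<longleftrightarrow> i' = i"
proof -
  have a: "rep u w K b i a ! Suc (Suc j) = (if j = i then w else u)" if "j < K" for j
    using that by (simp add: rep_def nth_append)
  have b: "rep u w K b i a ! 1 = u" by (simp add: rep_def)
  have "sortp K i' (rep u w K b i a) \<longleftrightarrow> (\<forall>j<K. ((if j = i then w else u) \<noteq> u) = (j = i'))"
    unfolding sortp_def using a b by simp
  also have "\<dots> \<longleftrightarrow> (\<forall>j<K. (j = i) = (j = i'))" using assms(1) by auto
  also have "\<dots> \<longleftrightarrow> i' = i" using assms(2,3) by metis
  finally show ?thesis .
qed

lemma rep_BV: assumes "u \<noteq> w" "i < K" shows "rep u w K b i a \<in> BV K (length b)"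
proof -
  have "sortp K i (rep u w K b i a)" using rep_sortp[OF assms assms(2)] by simp
  then show ?thesis using assms(2) by (auto simp: BV_def rep_length)
qed

lemma rep_0: "rep u w K b i a ! 0 = a" by (simp add: rep_def)

lemma rep_drop: "drop (K + 2) (rep u w K b i a) = b" by (simp add: rep_def)

lemma rep_BE:
  assumes uw: "u \<noteq> w" and mK: "m < K" and las: "length as = m"
  shows "map (\<lambda>i. rep u w K b i (as ! (if i < m then i else 0))) [0..<K] \<in> BE R \<phi> m K (length b)
     \<longleftrightarrow> sat R (as @ b) \<phi>"
    (is "?vs \<in> _ \<longleftrightarrow> _")
proof -
  let ?\<iota> = "\<lambda>i. if i < m then i else 0"
  have vsi: "?vs ! i = rep u w K b i (as ! ?\<iota> i)" if "i < K" for i using that by simp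
  have setvs: "set ?vs \<subseteq> BV K (length b)" using rep_BV[OF uw] by auto
  have cov: "\<forall>i<K. \<exists>v\<in>set ?vs. sortp K i v"
  proof (intro allI impI)
    fix i assume "i < K"
    have "?vs ! i \<in> set ?vs" by (intro nth_mem) (simp add: \<open>i < K\<close>)
    moreover have "sortp K i (?vs ! i)" using rep_sortp[OF uw \<open>i < K\<close> \<open>i < K\<close>] vsi[OF \<open>i < K\<close>] by simp
    ultimately show "\<exists>v\<in>set ?vs. sortp K i v" by blast
  qed
  have inset: "\<exists>j<K. v = rep u w K b j (as ! ?\<iota> j)" if "v \<in> set ?vs" for v
  proof -
    have "\<exists>j<length ?vs. ?vs ! j = v" using that by (simp only: in_set_conv_nth)
    then obtain j where j: "j < length ?vs" "v = ?vs ! j" by blast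
    then have "j < K" by simp
    with j(2) vsi[OF this] show ?thesis by blast
  qed
  show ?thesis
  proof
    assume "?vs \<in> BE R \<phi> m K (length b)"
    then obtain xs c where h: "length xs = K" "length c = length b"
      "\<forall>i<K. \<forall>v\<in>set ?vs. sortp K i v \<longrightarrow> xs ! i = v ! 0" "\<forall>v\<in>set ?vs. drop (K + 2) v = c"
      "sat R (take m xs @ c) \<phi>" unfolding BE_def by blast
    have "?vs ! 0 \<in> set ?vs" using mK by (intro nth_mem) simp
    then have "drop (K + 2) (?vs ! 0) = c" using h(4) by blast
    moreover have "0 < K" using mK by simp
    then have "drop (K + 2) (?vs ! 0) = b" by (simp only: vsi rep_drop)
    ultimately have cb: "c = b" by simp
    have "xs ! i = as ! i" if "i < m" for i
    proof -
      have "i < K" using that mK by simp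
      have "?vs ! i \<in> set ?vs" using \<open>i < K\<close> by (intro nth_mem) simp
      moreover have "sortp K i (?vs ! i)" using rep_sortp[OF uw \<open>i < K\<close> \<open>i < K\<close>] \<open>i < K\<close> by simp
      ultimately have "xs ! i = ?vs ! i ! 0" using h(3) \<open>i < K\<close> by blast
      then show ?thesis using \<open>i < K\<close> that by (simp add: rep_0)
    qed
    then have "take m xs = as" using h(1) mK las by (intro nth_equalityI) auto
    then show "sat R (as @ b) \<phi>" using h(5) cb by simp
  next
    assume s: "sat R (as @ b) \<phi>"
    define xs where "xs = map (\<lambda>i. as ! ?\<iota> i) [0..<K]"
    have t1: "take m xs = as" using mK las unfolding xs_def by (intro nth_equalityI) auto
    have t2: "\<forall>i<K. \<forall>v\<in>set ?vs. sortp K i v \<longrightarrow> xs ! i = v ! 0"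
    proof (intro allI impI ballI)
      fix i v assume "i < K" "v \<in> set ?vs" "sortp K i v"
      then obtain j where j: "j < K" "v = rep u w K b j (as ! ?\<iota> j)" using inset by blast
      then have "i = j" using rep_sortp[OF uw j(1) \<open>i < K\<close>] \<open>sortp K i v\<close> by simp
      then show "xs ! i = v ! 0" using j \<open>i < K\<close> by (simp add: xs_def rep_0)
    qed
    have t3: "\<forall>v\<in>set ?vs. drop (K + 2) v = b"
    proof
      fix v assume "v \<in> set ?vs"
      then obtain j where "j < K" "v = rep u w K b j (as ! ?\<iota> j)" using inset by blast
      then show "drop (K + 2) v = b" by (simp only: rep_drop)
    qed
    have t4: "length xs = K" by (simp add: xs_def)
    have t5: "sat R (take m xs @ b) \<phi>" using t1 s by simp
    have ex: "\<exists>xs c. length xs = K \<and> length c = length b \<and> (\<forall>i<K. \<forall>v\<in>set ?vs. sortp K i v \<longrightarrow> xs ! i = v ! 0) \<and>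
        (\<forall>v\<in>set ?vs. drop (K + 2) v = c) \<and> sat R (take m xs @ c) \<phi>"
      using t2 t3 t4 t5 by blast
    have "length ?vs = K" by simp
    then show "?vs \<in> BE R \<phi> m K (length b)"
      unfolding BE_def mem_Collect_eq using setvs cov ex by blast
  qed
qed


lemma partB:
  fixes RM :: "'r \<Rightarrow> 'a list \<Rightarrow> bool" and RN :: "'s \<Rightarrow> 'b list \<Rightarrow> bool"
  assumes H: "\<And>k d V E. k \<ge> 2 \<Longrightarrow> zero_def_hypergraph RM k d V E \<Longrightarrow>
     \<exists>d' W F f. hypergraph k W F \<and> W \<subseteq> {xs. length xs = d'} \<and> definable RN (d' * k) (concat ` F) \<and>
        hg_embedding k f V E W F"
  shows "locally_trace_defines RN RM"
  unfolding locally_trace_defines_def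
proof (intro exI[of _ UNIV] allI impI)
  fix m X assume "definable RM m X"
  then obtain \<phi> b where X: "X = {xs. length xs = m \<and> sat RM (xs @ b) \<phi>}" unfolding definable_def by blast
  show "\<exists>fs idx Y. length idx = length fs \<and> set fs \<subseteq> UNIV \<and> (\<forall>i\<in>set idx. i < m) \<and>
      definable RN (length fs) Y \<and> X = {as. length as = m \<and> map2 (\<lambda>f i. f (as ! i)) fs idx \<in> Y}"
  proof (cases "X = {} \<or> X = {xs. length xs = m}")
    case True
    define Y :: "'b list set" where "Y = (if X = {} then {} else {[]})"
    have "definable RN 0 Y"
    proof (cases "X = {}")
      case True
      have "zero_definable RN 0 {xs. length xs = 0 \<and> False}" by (rule zdp_zero_definable[OF zdp_false])
      then show ?thesis using True by (simp add: Y_def zero_definable_definable)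
    next
      case False
      have "zero_definable RN 0 {xs. length xs = 0 \<and> True}" by (rule zdp_zero_definable[OF zdp_true])
      moreover have "{xs :: 'b list. length xs = 0 \<and> True} = {[]}" by auto
      ultimately show ?thesis using False by (simp add: Y_def zero_definable_definable)
    qed
    moreover have "X = {as. length as = m \<and> map2 (\<lambda>f i. f (as ! i)) [] [] \<in> Y}"
      using True by (auto simp: Y_def)
    ultimately show ?thesis by (intro exI[of _ "[]"] exI[of _ Y]) simp
  next
    case False
    have m1: "m \<ge> 1"
    proof (rule ccontr)
      assume "\<not> m \<ge> 1"
      then have "m = 0" by simp
      then have "X \<subseteq> {[]}" using X by auto
      then have "X = {} \<or> X = {xs. length xs = m}" using \<open>m = 0\<close> by auto
      with False show False by blast
    qed
    obtain u0 w0 :: 'a where uw: "u0 \<noteq> w0"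
    proof (rule ccontr)
      assume "\<not> thesis"
      then have all: "u = w" for u w :: 'a using that by blast
      from False obtain x where x: "x \<in> X" using X by auto
      have "X = {xs. length xs = m}"
      proof
        show "X \<subseteq> {xs. length xs = m}" using X by auto
        show "{xs. length xs = m} \<subseteq> X"
        proof
          fix xs :: "'a list" assume "xs \<in> {xs. length xs = m}"
          moreover have "length x = m" using x X by simp
          ultimately have "xs = x" by (intro nth_equalityI) (auto intro: all)
          with x show "xs \<in> X" by simp
        qed
      qed
      with False show False by blast
    qed
    define K where "K = Suc m"
    define p where "p = length b"
    define d where "d = K + 2 + p"
    define V :: "'a list set" where "V = BV K p"
    define E where "E = BE RM \<phi> m K p"
    have K2: "K \<ge> 2" using m1 K_def by simp
    have mK: "m < K" "m \<le> K" using K_def by simp_all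
    have zdh: "zero_def_hypergraph RM K d V E"
      unfolding zero_def_hypergraph_def V_def E_def d_def
      using BE_hypergraph BV_zd BE_zd[OF mK(2)] by (auto simp: BV_def)
    obtain d' W F f where hF: "hypergraph K W F" and W: "W \<subseteq> {xs. length xs = d'}"
      and dF: "definable RN (d' * K) (concat ` F)" and emb: "hg_embedding K f V E W F"
      using H[OF K2 zdh] by blast
    have fV: "length (f v) = d'" if "v \<in> V" for v
      using emb W that unfolding hg_embedding_def by auto
    define r where "r i a = rep u0 w0 K b i a" for i a
    define \<iota> where "\<iota> i = (if i < m then i else 0)" for i
    have rV: "r i a \<in> V" if "i < K" for i a
      unfolding r_def V_def p_def by (rule rep_BV[OF uw that])
    define P where "P = concat (map (\<lambda>i. map (\<lambda>t. (\<lambda>a. f (r i a) ! t, \<iota> i)) [0..<d']) [0..<K])"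
    have lenP: "length P = d' * K"
      unfolding P_def by (subst length_concat_unif[of _ d']) auto
    have idxb: "\<forall>i\<in>set (map snd P). i < m"
      using m1 by (auto simp: P_def \<iota>_def)
    have m2: "map2 (\<lambda>g i. g (as ! i)) (map fst P) (map snd P) = concat (map (\<lambda>i. f (r i (as ! \<iota> i))) [0..<K])"
      for as :: "'a list"
    proof -
      have "map2 (\<lambda>g i. g (as ! i)) (map fst P) (map snd P) = map (\<lambda>x. fst x (as ! snd x)) P"
        by (rule map2_map_map)
      also have "\<dots> = concat (map (\<lambda>i. map (\<lambda>t. f (r i (as ! \<iota> i)) ! t) [0..<d']) [0..<K])"
        unfolding P_def map_concat by (simp add: comp_def)
      also have "\<dots> = concat (map (\<lambda>i. f (r i (as ! \<iota> i))) [0..<K])"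
      proof -
        have "map (\<lambda>t. f (r i (as ! \<iota> i)) ! t) [0..<d'] = f (r i (as ! \<iota> i))" if "i < K" for i
          using fV[OF rV[OF that]] by (intro nth_equalityI) auto
        then show ?thesis by (intro arg_cong[where f = concat] map_cong) auto
      qed
      finally show ?thesis .
    qed
    have Xeq: "X = {as. length as = m \<and> map2 (\<lambda>g i. g (as ! i)) (map fst P) (map snd P) \<in> concat ` F}"
    proof (rule set_eqI)
      fix as :: "'a list"
      show "as \<in> X \<longleftrightarrow> as \<in> {as. length as = m \<and> map2 (\<lambda>g i. g (as ! i)) (map fst P) (map snd P) \<in> concat ` F}"
      proof (cases "length as = m")
        case False then show ?thesis by (simp add: X)
      next
        case True
        define vsa where "vsa = map (\<lambda>i. r i (as ! \<iota> i)) [0..<K]"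
        have lv: "length vsa = K" by (simp add: vsa_def)
        have sv: "set vsa \<subseteq> V" using rV by (auto simp: vsa_def)
        have e1: "as \<in> X \<longleftrightarrow> vsa \<in> E"
          using rep_BE[OF uw mK(1) True, of b RM \<phi>] True
          unfolding X vsa_def r_def \<iota>_def E_def p_def by simp
        have e2: "vsa \<in> E \<longleftrightarrow> map f vsa \<in> F" using emb lv sv unfolding hg_embedding_def by blast
        have e3: "map f vsa \<in> F \<longleftrightarrow> concat (map f vsa) \<in> concat ` F"
        proof
          assume "concat (map f vsa) \<in> concat ` F"
          then obtain ws where ws: "ws \<in> F" "concat (map f vsa) = concat ws" by auto
          have lws: "length ws = K" "set ws \<subseteq> W" using hF ws(1) unfolding hypergraph_def by auto
          have "map f vsa = ws"
          proof (rule concat_inj_unif[of _ d'])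
            show "\<forall>v\<in>set (map f vsa). length v = d'" using fV sv by auto
            show "\<forall>v\<in>set ws. length v = d'" using lws W by auto
          qed (use lv lws ws in simp_all)
          with ws show "map f vsa \<in> F" by simp
        qed auto
        have e4: "concat (map f vsa) = map2 (\<lambda>g i. g (as ! i)) (map fst P) (map snd P)"
          unfolding m2 vsa_def by (simp add: comp_def)
        show ?thesis using e1 e2 e3 e4 True by simp
      qed
    qed
    show ?thesis
      apply (intro exI[of _ "map fst P"] exI[of _ "map snd P"] exI[of _ "concat ` F"])
      using idxb dF lenP Xeq by (simp add: mult.commute)
  qed
qed


definition tau :: "('a \<Rightarrow> 'b) list \<Rightarrow> nat \<Rightarrow> 'b list \<Rightarrow> 'a list \<Rightarrow> 'b list" where
  "tau G d bE v = concat (map (\<lambda>g. map (\<lambda>c. g (v ! c)) [0..<d]) G) @ bE"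

lemma tau_length: "length (tau G d bE v) = d * length G + length bE"
  unfolding tau_def length_append by (subst length_concat_unif[of _ d]) auto

lemma tau_nth1: assumes "i < length G" "c < d" shows "tau G d bE v ! (i * d + c) = (G ! i) (v ! c)"
proof -
  have l: "length (concat (map (\<lambda>g. map (\<lambda>c. g (v ! c)) [0..<d]) G)) = d * length G"
    by (subst length_concat_unif[of _ d]) auto
  have "i * d + c < d * length G" using idx_bound[OF assms] .
  then have "tau G d bE v ! (i * d + c) = concat (map (\<lambda>g. map (\<lambda>c. g (v ! c)) [0..<d]) G) ! (i * d + c)"
    unfolding tau_def using l by (simp add: nth_append)
  also have "\<dots> = map (\<lambda>g. map (\<lambda>c. g (v ! c)) [0..<d]) G ! i ! c"
    by (rule nth_concat_unif) (use assms in auto)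
  also have "\<dots> = (G ! i) (v ! c)" using assms by simp
  finally show ?thesis .
qed

lemma tau_nth2: assumes "t < length bE" shows "tau G d bE v ! (d * length G + t) = bE ! t"
proof -
  have l: "length (concat (map (\<lambda>g. map (\<lambda>c. g (v ! c)) [0..<d]) G)) = d * length G"
    by (subst length_concat_unif[of _ d]) auto
  show ?thesis unfolding tau_def using l by (simp add: nth_append)
qed

lemma rho_lemma:
  fixes fsE fsQ :: "('a \<Rightarrow> 'b) list"
  assumes vs: "length vs = k" "\<forall>v\<in>set vs. length v = d" and k: "k \<ge> 1"
    and idx: "length idxE = length fsE" "\<forall>i\<in>set idxE. i < d * k"
    and G: "G = fsE @ fsQ" and d': "d' = d * length G + length bE"
    and \<rho>: "\<rho> = (\<lambda>i. if i < length fsE then (idxE ! i div d) * d' + (i * d + idxE ! i mod d)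
                    else d * length G + (i - length fsE))"
  shows "map (\<lambda>i. concat (map (tau G d bE) vs) ! \<rho> i) [0..<length fsE + length bE]
         = map2 (\<lambda>f i. f (concat vs ! i)) fsE idxE @ bE"
    and "\<forall>i<length fsE + length bE. \<rho> i < d' * k"
proof -
  have ltau: "\<forall>w\<in>set (map (tau G d bE) vs). length w = d'" using tau_length d' by auto
  have lm2: "length (map2 (\<lambda>f i. f (concat vs ! i)) fsE idxE) = length fsE" using idx by simp
  have A: "concat (map (tau G d bE) vs) ! \<rho> i = (map2 (\<lambda>f i. f (concat vs ! i)) fsE idxE @ bE) ! i \<and> \<rho> i < d' * k"
    if i: "i < length fsE + length bE" for i
  proof (cases "i < length fsE")
    case True
    define x where "x = idxE ! i"
    have x: "x < d * k" using idx True unfolding x_def by (metis nth_mem)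
    define q where "q = x div d"
    define c where "c = x mod d"
    have qc: "q < k" "c < d" "x = q * d + c" using divmod_bound[OF x] unfolding q_def c_def by auto
    have iG: "i < length G" using True G by simp
    have ic: "i * d + c < d * length G" using idx_bound[OF iG qc(2)] .
    then have ic': "i * d + c < d'" using d' by simp
    have r: "\<rho> i = q * d' + (i * d + c)" using True \<rho> unfolding q_def c_def x_def by simp
    have "concat (map (tau G d bE) vs) ! (q * d' + (i * d + c)) = map (tau G d bE) vs ! q ! (i * d + c)"
      by (rule nth_concat_unif[OF ltau]) (use qc vs ic' in simp_all)
    also have "\<dots> = tau G d bE (vs ! q) ! (i * d + c)" using qc vs by simp
    also have "\<dots> = (G ! i) (vs ! q ! c)" by (rule tau_nth1[OF iG qc(2)])
    also have "\<dots> = (fsE ! i) (vs ! q ! c)" using G True by (simp add: nth_append)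
    also have "vs ! q ! c = concat vs ! x"
      using nth_concat_unif[OF vs(2), of q c] qc vs by simp
    also have "(fsE ! i) (concat vs ! x) = (map2 (\<lambda>f i. f (concat vs ! i)) fsE idxE @ bE) ! i"
      using True lm2 idx unfolding x_def by (simp add: nth_append)
    finally have eq: "concat (map (tau G d bE) vs) ! \<rho> i = (map2 (\<lambda>f i. f (concat vs ! i)) fsE idxE @ bE) ! i"
      using r by simp
    have "q * d' + (i * d + c) < d' * k" using idx_bound[OF qc(1) ic'] .
    with eq r show ?thesis by simp
  next
    case False
    define t where "t = i - length fsE"
    have t: "t < length bE" "i = length fsE + t" using False i unfolding t_def by auto
    have r: "\<rho> i = d * length G + t" using False \<rho> unfolding t_def by simp
    have k0: "0 < k" using k by simp
    have dt: "d * length G + t < d'" using d' t by simp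
    have "concat (map (tau G d bE) vs) ! (0 * d' + (d * length G + t)) = map (tau G d bE) vs ! 0 ! (d * length G + t)"
      by (rule nth_concat_unif[OF ltau]) (use k0 vs dt in simp_all)
    also have "\<dots> = tau G d bE (vs ! 0) ! (d * length G + t)" using k0 vs by simp
    also have "\<dots> = bE ! t" by (rule tau_nth2[OF t(1)])
    also have "\<dots> = (map2 (\<lambda>f i. f (concat vs ! i)) fsE idxE @ bE) ! i" using t lm2 by (simp add: nth_append)
    finally have eq: "concat (map (tau G d bE) vs) ! \<rho> i = (map2 (\<lambda>f i. f (concat vs ! i)) fsE idxE @ bE) ! i"
      using r by simp
    have "d * length G + t < d' * k" using dt k by (metis less_le_trans mult_le_mono2 nat_mult_1_right mult.commute)
    with eq r show ?thesis by simp
  qed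
  show "map (\<lambda>i. concat (map (tau G d bE) vs) ! \<rho> i) [0..<length fsE + length bE]
         = map2 (\<lambda>f i. f (concat vs ! i)) fsE idxE @ bE"
    by (rule nth_equalityI) (use A lm2 in auto)
  show "\<forall>i<length fsE + length bE. \<rho> i < d' * k" using A by blast
qed

lemma sig_bound:
  fixes \<pi> :: "nat \<Rightarrow> nat" and t d' k :: nat
  assumes "\<pi> permutes {..<k}" "t < d' * k"
  shows "\<pi> (t div d') * d' + t mod d' < d' * k"
proof -
  have "t div d' < k" "t mod d' < d'" using divmod_bound[OF assms(2)] by auto
  moreover then have "\<pi> (t div d') < k" using permutes_in_image[OF assms(1)] by simp
  ultimately show ?thesis using idx_bound by blast
qed

lemma F_zd:
  fixes R :: "'s \<Rightarrow> 'b list \<Rightarrow> bool"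
  assumes Pz: "zdp R n Pz" and \<rho>: "\<forall>i<n. \<rho> i < d' * k"
  shows "zero_definable R (d' * k) (concat ` {ws. length ws = k \<and> (\<forall>w\<in>set ws. length w = d') \<and> distinct ws \<and>
     (\<forall>ws'. mset ws' = mset ws \<longrightarrow> Pz (map (\<lambda>i. concat ws' ! \<rho> i) [0..<n]))})"
    (is "zero_definable R _ (concat ` ?F)")
proof -
  define \<sigma> where "\<sigma> \<pi> t = \<pi> (t div d') * d' + t mod d'" for \<pi> :: "nat \<Rightarrow> nat" and t
  have Fl: "length ws = k" "\<forall>w\<in>set ws. length w = d'" if "ws \<in> ?F" for ws using that by auto
  have zQ: "zdp R (d' * k) (\<lambda>zs. (\<forall>i<k. \<forall>j<k. i \<noteq> j \<longrightarrow> (\<exists>c<d'. zs ! (i * d' + c) \<noteq> zs ! (j * d' + c))) \<and>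
     (\<forall>\<pi>\<in>{\<pi>. \<pi> permutes {..<k}}. Pz (map (\<lambda>i. zs ! \<sigma> \<pi> (\<rho> i)) [0..<n])))"
  proof (rule zdp_and)
    show "zdp R (d' * k) (\<lambda>zs. \<forall>i<k. \<forall>j<k. i \<noteq> j \<longrightarrow> (\<exists>c<d'. zs ! (i * d' + c) \<noteq> zs ! (j * d' + c)))"
      apply (intro zdp_all_lt zdp_imp zdp_const zdp_ex_lt zdp_not)
      apply (rule zdp_eq; rule idx_bound; assumption)
      done
    show "zdp R (d' * k) (\<lambda>zs. \<forall>\<pi>\<in>{\<pi>. \<pi> permutes {..<k}}. Pz (map (\<lambda>i. zs ! \<sigma> \<pi> (\<rho> i)) [0..<n]))"
    proof (rule zdp_all)
      show "finite {\<pi>. \<pi> permutes {..<k}}" by (rule finite_permutations) simp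
      fix \<pi> assume "\<pi> \<in> {\<pi>. \<pi> permutes {..<k}}"
      then have "\<pi> permutes {..<k}" by simp
      show "zdp R (d' * k) (\<lambda>zs. Pz (map (\<lambda>i. zs ! \<sigma> \<pi> (\<rho> i)) [0..<n]))"
        by (rule zdp_pull[OF Pz]) (use \<rho> sig_bound[OF \<open>\<pi> permutes {..<k}\<close>] in \<open>auto simp: \<sigma>_def\<close>)
    qed
  qed
  have "zdp R (d' * k) (\<lambda>zs. zs \<in> concat ` ?F)"
  proof (rule zdp_cong[OF zQ])
    fix zs :: "'b list" assume lz: "length zs = d' * k"
    obtain ws where ws: "length ws = k" "\<forall>w\<in>set ws. length w = d'" "concat ws = zs"
      using chunks_exist[OF lz] by blast
    have acc: "zs ! (i * d' + c) = ws ! i ! c" if "i < k" "c < d'" for i c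
      using nth_concat_unif[OF ws(2)] that ws by auto
    have inF: "zs \<in> concat ` ?F \<longleftrightarrow> ws \<in> ?F"
    proof
      assume "zs \<in> concat ` ?F"
      then obtain ws' where w1: "ws' \<in> ?F" and w2: "zs = concat ws'" by blast
      have "ws' = ws" by (rule concat_inj_unif[OF Fl(2)[OF w1] ws(2)]) (use Fl(1)[OF w1] ws w2 in simp_all)
      with w1 show "ws \<in> ?F" by simp
    next
      assume h: "ws \<in> ?F"
      show "zs \<in> concat ` ?F" by (rule rev_image_eqI[OF h]) (simp add: ws(3))
    qed
    have D: "distinct ws \<longleftrightarrow> (\<forall>i<k. \<forall>j<k. i \<noteq> j \<longrightarrow> (\<exists>c<d'. zs ! (i * d' + c) \<noteq> zs ! (j * d' + c)))"
    proof -
      have "ws ! i \<noteq> ws ! j \<longleftrightarrow> (\<exists>c<d'. zs ! (i * d' + c) \<noteq> zs ! (j * d' + c))" if "i < k" "j < k" for i j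
      proof -
        have "length (ws ! i) = d'" "length (ws ! j) = d'" using ws that by auto
        then have "ws ! i = ws ! j \<longleftrightarrow> (\<forall>c<d'. ws ! i ! c = ws ! j ! c)" by (simp add: list_eq_iff_nth_eq)
        then show ?thesis using acc that by auto
      qed
      then show ?thesis unfolding distinct_conv_nth using ws(1) by auto
    qed
    have perm: "concat (permute_list \<pi> ws) ! x = zs ! \<sigma> \<pi> x" if "\<pi> permutes {..<k}" "x < d' * k" for \<pi> x
    proof -
      have q: "x div d' < k" "x mod d' < d'" "x = x div d' * d' + x mod d'" using divmod_bound[OF that(2)] by auto
      have pk: "\<pi> permutes {..<length ws}" using that(1) ws(1) by simp
      have "concat (permute_list \<pi> ws) ! (x div d' * d' + x mod d') = permute_list \<pi> ws ! (x div d') ! (x mod d')"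
        by (rule nth_concat_unif) (use ws q pk in simp_all)
      also have "\<dots> = ws ! \<pi> (x div d') ! (x mod d')" using permute_list_nth[OF pk] q ws by simp
      also have "\<dots> = zs ! \<sigma> \<pi> x" unfolding \<sigma>_def
        using acc[of "\<pi> (x div d')" "x mod d'"] q permutes_in_image[OF that(1)] by simp
      finally show ?thesis using q by simp
    qed
    have S: "(\<forall>ws'. mset ws' = mset ws \<longrightarrow> Pz (map (\<lambda>i. concat ws' ! \<rho> i) [0..<n])) \<longleftrightarrow>
       (\<forall>\<pi>\<in>{\<pi>. \<pi> permutes {..<k}}. Pz (map (\<lambda>i. zs ! \<sigma> \<pi> (\<rho> i)) [0..<n]))"
    proof -
      have mp: "map (\<lambda>i. concat (permute_list \<pi> ws) ! \<rho> i) [0..<n] = map (\<lambda>i. zs ! \<sigma> \<pi> (\<rho> i)) [0..<n]"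
        if "\<pi> permutes {..<k}" for \<pi>
        using perm[OF that] \<rho> by (intro map_cong) auto
      show ?thesis
      proof
        assume h: "\<forall>ws'. mset ws' = mset ws \<longrightarrow> Pz (map (\<lambda>i. concat ws' ! \<rho> i) [0..<n])"
        show "\<forall>\<pi>\<in>{\<pi>. \<pi> permutes {..<k}}. Pz (map (\<lambda>i. zs ! \<sigma> \<pi> (\<rho> i)) [0..<n])"
        proof
          fix \<pi> assume "\<pi> \<in> {\<pi>. \<pi> permutes {..<k}}"
          then have p: "\<pi> permutes {..<k}" by simp
          then have "mset (permute_list \<pi> ws) = mset ws" using ws(1) by (intro mset_permute_list) simp
          with h have "Pz (map (\<lambda>i. concat (permute_list \<pi> ws) ! \<rho> i) [0..<n])" by blast
          then show "Pz (map (\<lambda>i. zs ! \<sigma> \<pi> (\<rho> i)) [0..<n])" using mp[OF p] by simp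
        qed
      next
        assume h: "\<forall>\<pi>\<in>{\<pi>. \<pi> permutes {..<k}}. Pz (map (\<lambda>i. zs ! \<sigma> \<pi> (\<rho> i)) [0..<n])"
        show "\<forall>ws'. mset ws' = mset ws \<longrightarrow> Pz (map (\<lambda>i. concat ws' ! \<rho> i) [0..<n])"
        proof (intro allI impI)
          fix ws' :: "'b list list" assume "mset ws' = mset ws"
          then obtain \<pi> where p: "\<pi> permutes {..<length ws}" "permute_list \<pi> ws = ws'"
            by (rule mset_eq_permutation)
          then have p': "\<pi> permutes {..<k}" using ws(1) by simp
          with h have pz: "Pz (map (\<lambda>i. zs ! \<sigma> \<pi> (\<rho> i)) [0..<n])" by blast
          have e: "map (\<lambda>i. concat ws' ! \<rho> i) [0..<n] = map (\<lambda>i. zs ! \<sigma> \<pi> (\<rho> i)) [0..<n]"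
            using mp[OF p'] by (simp only: p(2))
          show "Pz (map (\<lambda>i. concat ws' ! \<rho> i) [0..<n])" unfolding e by (rule pz)
        qed
      qed
    qed
    show "((\<forall>i<k. \<forall>j<k. i \<noteq> j \<longrightarrow> (\<exists>c<d'. zs ! (i * d' + c) \<noteq> zs ! (j * d' + c))) \<and>
     (\<forall>\<pi>\<in>{\<pi>. \<pi> permutes {..<k}}. Pz (map (\<lambda>i. zs ! \<sigma> \<pi> (\<rho> i)) [0..<n]))) \<longleftrightarrow> zs \<in> concat ` ?F"
      unfolding inF using ws(1,2) D S by simp
  qed
  from zdp_zero_definable[OF this] have "zero_definable R (d' * k) {zs. length zs = d' * k \<and> zs \<in> concat ` ?F}" .
  moreover have "length zs = d' * k" if "zs \<in> concat ` ?F" for zs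
  proof -
    from that obtain ws where w: "ws \<in> ?F" "zs = concat ws" by blast
    show ?thesis using length_concat_unif[OF Fl(2)[OF w(1)]] Fl(1)[OF w(1)] w(2) by simp
  qed
  then have "{zs. length zs = d' * k \<and> zs \<in> concat ` ?F} = concat ` ?F" by blast
  ultimately show ?thesis by simp
qed

lemma partA:
  fixes RM :: "'r \<Rightarrow> 'a list \<Rightarrow> bool" and RN :: "'s \<Rightarrow> 'b list \<Rightarrow> bool"
  assumes LTD: "locally_trace_defines RN RM" and k: "k \<ge> 1" and hg: "def_hypergraph RM k d V E"
  shows "\<exists>d' W F f. zero_def_hypergraph RN k d' W F \<and> hg_embedding k f V E W F"
proof -
  from LTD obtain Ec :: "('a \<Rightarrow> 'b) set" where L: "\<And>m X. definable RM m X \<Longrightarrow>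
        (\<exists>fs idx Y. length idx = length fs \<and> set fs \<subseteq> Ec \<and> (\<forall>i\<in>set idx. i < m) \<and>
           definable RN (length fs) Y \<and> X = {as. length as = m \<and> map2 (\<lambda>f i. f (as ! i)) fs idx \<in> Y})"
    unfolding locally_trace_defines_def by blast
  from hg have hV: "hypergraph k V E" "V \<subseteq> {xs. length xs = d}" "definable RM (d * k) (concat ` E)"
    unfolding def_hypergraph_def by auto
  obtain fsE idxE YE where E1: "length idxE = length fsE" "\<forall>i\<in>set idxE. i < d * k" "definable RN (length fsE) YE"
    "concat ` E = {as. length as = d * k \<and> map2 (\<lambda>f i. f (as ! i)) fsE idxE \<in> YE}"
    using L[OF hV(3)] by blast
  have dQ: "definable RM 2 {xs. length xs = 2 \<and> xs ! 0 = xs ! 1}"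
    by (rule zero_definable_definable[OF zdp_zero_definable[OF zdp_eq]]) simp_all
  obtain fsQ :: "('a \<Rightarrow> 'b) list" and idxQ YQ where Q1: "length idxQ = length fsQ" "\<forall>i\<in>set idxQ. i < 2"
    "{xs. length xs = 2 \<and> xs ! 0 = xs ! 1} = {as. length as = 2 \<and> map2 (\<lambda>f i. f (as ! i)) fsQ idxQ \<in> YQ}"
    using L[OF dQ] by blast
  have Qinj: "x = y" if xy: "\<forall>g\<in>set fsQ. g x = g y" for x y :: 'a
  proof -
    have "[x, x] \<in> {xs. length xs = 2 \<and> xs ! 0 = xs ! 1}" by simp
    then have m1: "map2 (\<lambda>f i. f ([x, x] ! i)) fsQ idxQ \<in> YQ" unfolding Q1(3) by simp
    have eq: "map2 (\<lambda>f i. f ([x, y] ! i)) fsQ idxQ = map2 (\<lambda>f i. f ([x, x] ! i)) fsQ idxQ"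
    proof (rule map_cong[OF refl])
      fix z assume z: "z \<in> set (zip fsQ idxQ)"
      obtain g i where gi: "z = (g, i)" by fastforce
      have "g \<in> set fsQ" "i \<in> set idxQ" using z gi by (auto dest: set_zip_leftD set_zip_rightD)
      then have "g x = g y" "i = 0 \<or> i = 1" using xy Q1(2) by auto
      then show "(\<lambda>(f, i). f ([x, y] ! i)) z = (\<lambda>(f, i). f ([x, x] ! i)) z" using gi by auto
    qed
    have "map2 (\<lambda>f i. f ([x, y] ! i)) fsQ idxQ \<in> YQ" unfolding eq by (rule m1)
    then have "[x, y] \<in> {as. length as = 2 \<and> map2 (\<lambda>f i. f (as ! i)) fsQ idxQ \<in> YQ}" by simp
    then have "[x, y] \<in> {xs. length xs = 2 \<and> xs ! 0 = xs ! 1}" unfolding Q1(3) .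
    then show ?thesis by simp
  qed
  from E1(3) obtain \<phi>E bE where YE: "YE = {xs. length xs = length fsE \<and> sat RN (xs @ bE) \<phi>E}"
    unfolding definable_def by blast
  define G where "G = fsE @ fsQ"
  define d' where "d' = d * length G + length bE"
  define \<rho> where "\<rho> = (\<lambda>i. if i < length fsE then (idxE ! i div d) * d' + (i * d + idxE ! i mod d)
                    else d * length G + (i - length fsE))"
  define n where "n = length fsE + length bE"
  define F where "F = {ws. length ws = k \<and> (\<forall>w\<in>set ws. length w = d') \<and> distinct ws \<and>
     (\<forall>ws'. mset ws' = mset ws \<longrightarrow> sat RN (map (\<lambda>i. concat ws' ! \<rho> i) [0..<n]) \<phi>E)}"
  define W :: "'b list set" where "W = {w. length w = d'}"
  define \<tau> where "\<tau> = tau G d bE"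
  have RL: "map (\<lambda>i. concat (map \<tau> vs) ! \<rho> i) [0..<n] = map2 (\<lambda>f i. f (concat vs ! i)) fsE idxE @ bE"
    if "length vs = k" "\<forall>v\<in>set vs. length v = d" for vs
    using rho_lemma(1)[OF that k E1(1,2) G_def d'_def \<rho>_def] unfolding \<tau>_def n_def .
  have Rb: "\<forall>i<n. \<rho> i < d' * k"
    using rho_lemma(2)[of "replicate k (replicate d undefined)" k d, OF _ _ k E1(1,2) G_def d'_def \<rho>_def]
    unfolding n_def by simp
  have zF: "zero_definable RN (d' * k) (concat ` F)"
    unfolding F_def using F_zd[OF zdp_sat[of RN n \<phi>E] Rb] by simp
  have hF: "hypergraph k W F"
    unfolding hypergraph_def
  proof (intro conjI ballI allI impI)
    fix vs assume "vs \<in> F"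
    then show "length vs = k" "set vs \<subseteq> W" "distinct vs" unfolding F_def W_def by auto
  next
    fix vs ws :: "'b list list" assume "length vs = k" "set vs \<subseteq> W" "mset vs = mset ws"
    then have "length ws = length vs" "set ws = set vs" "distinct ws \<longleftrightarrow> distinct vs"
      by (metis mset_eq_length, metis mset_eq_setD, metis mset_eq_imp_distinct_iff)
    then show "vs \<in> F \<longleftrightarrow> ws \<in> F" using \<open>mset vs = mset ws\<close> unfolding F_def by simp
  qed
  have zW: "zero_definable RN d' W"
  proof -
    have "zero_definable RN d' {xs. length xs = d' \<and> True}" by (rule zdp_zero_definable[OF zdp_true])
    then show ?thesis unfolding W_def by simp
  qed
  have \<tau>len: "length (\<tau> v) = d'" for v unfolding \<tau>_def d'_def by (rule tau_length)
  have \<tau>inj: "inj_on \<tau> V"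
  proof (rule inj_onI)
    fix v w assume v: "v \<in> V" and w: "w \<in> V" and e: "\<tau> v = \<tau> w"
    have lv: "length v = d" "length w = d" using v w hV(2) by auto
    let ?A = "\<lambda>v. map (\<lambda>g. map (\<lambda>c. g (v ! c)) [0..<d]) G"
    from e have "concat (?A v) = concat (?A w)" unfolding \<tau>_def tau_def by simp
    then have "?A v = ?A w" by (intro concat_inj_unif[of _ d]) auto
    then have "\<forall>g\<in>set G. \<forall>c\<in>set [0..<d]. g (v ! c) = g (w ! c)" by simp
    then have "\<forall>g\<in>set fsQ. g (v ! c) = g (w ! c)" if "c < d" for c using that by (auto simp: G_def)
    then have "v ! c = w ! c" if "c < d" for c using Qinj that by blast
    then show "v = w" using lv by (intro nth_equalityI) auto
  qed
  have Eunif: "length vs = k \<and> (\<forall>v\<in>set vs. length v = d)" if "vs \<in> E" for vs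
    using that hV(1,2) unfolding hypergraph_def by blast
  have E_iff: "concat vs \<in> concat ` E \<longleftrightarrow> sat RN (map (\<lambda>i. concat (map \<tau> vs) ! \<rho> i) [0..<n]) \<phi>E"
    if "length vs = k" "\<forall>v\<in>set vs. length v = d" for vs
  proof -
    have lc: "length (concat vs) = d * k" using length_concat_unif[OF that(2)] that(1) by simp
    have lm: "length (map2 (\<lambda>f i. f (concat vs ! i)) fsE idxE) = length fsE" using E1(1) by simp
    show ?thesis unfolding RL[OF that] E1(4) YE using lc lm by simp
  qed
  have vsE: "vs \<in> E \<longleftrightarrow> concat vs \<in> concat ` E" if "length vs = k" "\<forall>v\<in>set vs. length v = d" for vs
  proof
    assume "concat vs \<in> concat ` E"
    then obtain vs' where "vs' \<in> E" "concat vs = concat vs'" by auto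
    moreover then have "vs = vs'" using Eunif[of vs'] that by (intro concat_inj_unif[of _ d]) auto
    ultimately show "vs \<in> E" by simp
  qed simp
  have emb: "hg_embedding k \<tau> V E W F"
    unfolding hg_embedding_def
  proof (intro conjI allI impI)
    show "\<tau> ` V \<subseteq> W" using \<tau>len by (auto simp: W_def)
    show "inj_on \<tau> V" by (rule \<tau>inj)
    fix vs assume lv: "length vs = k" and sv: "set vs \<subseteq> V"
    have ud: "\<forall>v\<in>set vs. length v = d" using sv hV(2) by auto
    show "vs \<in> E \<longleftrightarrow> map \<tau> vs \<in> F"
    proof
      assume vE: "vs \<in> E"
      have "distinct vs" using vE hV(1) unfolding hypergraph_def by blast
      then have dm: "distinct (map \<tau> vs)" using \<tau>inj sv by (simp add: distinct_map inj_on_subset)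
      have "sat RN (map (\<lambda>i. concat ws' ! \<rho> i) [0..<n]) \<phi>E" if ms: "mset ws' = mset (map \<tau> vs)" for ws'
      proof -
        obtain \<pi> where p: "\<pi> permutes {..<length (map \<tau> vs)}" "permute_list \<pi> (map \<tau> vs) = ws'"
          using mset_eq_permutation[OF ms] by blast
        have p': "\<pi> permutes {..<length vs}" using p(1) by simp
        define vs' where "vs' = permute_list \<pi> vs"
        have "ws' = permute_list \<pi> (map \<tau> vs)" using p(2) by simp
        also have "\<dots> = map \<tau> (permute_list \<pi> vs)" by (rule permute_list_map[OF p'])
        finally have ws': "ws' = map \<tau> vs'" unfolding vs'_def .
        have mv: "mset vs = mset vs'" unfolding vs'_def using mset_permute_list[OF p'] by simp
        have "vs' \<in> E" using hV(1) lv sv mv vE unfolding hypergraph_def by blast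
        then have lv': "length vs' = k" "\<forall>v\<in>set vs'. length v = d" using Eunif by auto
        have "concat vs' \<in> concat ` E" using \<open>vs' \<in> E\<close> by simp
        then show ?thesis using E_iff[OF lv'] ws' by simp
      qed
      then show "map \<tau> vs \<in> F" unfolding F_def using lv \<tau>len dm by auto
    next
      assume "map \<tau> vs \<in> F"
      then have "sat RN (map (\<lambda>i. concat (map \<tau> vs) ! \<rho> i) [0..<n]) \<phi>E" unfolding F_def by blast
      then have "concat vs \<in> concat ` E" using E_iff[OF lv ud] by simp
      then show "vs \<in> E" using vsE[OF lv ud] by simp
    qed
  qed
  have "zero_def_hypergraph RN k d' W F"
    unfolding zero_def_hypergraph_def using hF zW zF by (auto simp: W_def)
  with emb show ?thesis by blast
qed


lemma zdh_dh: "zero_def_hypergraph R k d V E \<Longrightarrow> def_hypergraph R k d V E"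
  unfolding zero_def_hypergraph_def def_hypergraph_def using zero_definable_definable by blast

theorem proposition2p10:
  fixes RM :: "'r \<Rightarrow> 'a list \<Rightarrow> bool" and RN :: "'s \<Rightarrow> 'b list \<Rightarrow> bool"
  shows
   "(locally_trace_defines RN RM \<longleftrightarrow>
      (\<forall>k\<ge>2. \<forall>d V E. def_hypergraph RM k d V E \<longrightarrow>
         (\<exists>d' W F f. def_hypergraph RN k d' W F \<and> hg_embedding k f V E W F))) \<and>
    (locally_trace_defines RN RM \<longleftrightarrow>
      (\<forall>k\<ge>2. \<forall>d V E. zero_def_hypergraph RM k d V E \<longrightarrow>
         (\<exists>d' W F f. zero_def_hypergraph RN k d' W F \<and> hg_embedding k f V E W F)))"
proof (intro conjI iffI allI impI)
  fix k d V E
  assume L: "locally_trace_defines RN RM" and k: "2 \<le> k" and h: "def_hypergraph RM k d V E"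
  from partA[OF L _ h] k obtain d' W F f where "zero_def_hypergraph RN k d' W F" "hg_embedding k f V E W F"
    by (metis le_trans one_le_numeral)
  then show "\<exists>d' W F f. def_hypergraph RN k d' W F \<and> hg_embedding k f V E W F" using zdh_dh by blast
next
  assume H: "\<forall>k\<ge>2. \<forall>d V E. def_hypergraph RM k d V E \<longrightarrow>
         (\<exists>d' W F f. def_hypergraph RN k d' W F \<and> hg_embedding k f V E W F)"
  show "locally_trace_defines RN RM"
  proof (rule partB)
    fix k d V E
    assume "2 \<le> k" "zero_def_hypergraph RM k d V E"
    with H obtain d' W F f where "def_hypergraph RN k d' W F" "hg_embedding k f V E W F"
      using zdh_dh by blast
    then show "\<exists>d' W F f. hypergraph k W F \<and> W \<subseteq> {xs. length xs = d'} \<and> definable RN (d' * k) (concat ` F) \<and>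
        hg_embedding k f V E W F" unfolding def_hypergraph_def by blast
  qed
next
  fix k d V E
  assume L: "locally_trace_defines RN RM" and k: "2 \<le> k" and h: "zero_def_hypergraph RM k d V E"
  from partA[OF L _ zdh_dh[OF h]] k show "\<exists>d' W F f. zero_def_hypergraph RN k d' W F \<and> hg_embedding k f V E W F"
    by (metis le_trans one_le_numeral)
next
  assume H: "\<forall>k\<ge>2. \<forall>d V E. zero_def_hypergraph RM k d V E \<longrightarrow>
         (\<exists>d' W F f. zero_def_hypergraph RN k d' W F \<and> hg_embedding k f V E W F)"
  show "locally_trace_defines RN RM"
  proof (rule partB)
    fix k d V E
    assume "2 \<le> k" "zero_def_hypergraph RM k d V E"
    with H obtain d' W F f where z: "zero_def_hypergraph RN k d' W F" and e: "hg_embedding k f V E W F"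
      by blast
    from z have "hypergraph k W F" "W \<subseteq> {xs. length xs = d'}" "definable RN (d' * k) (concat ` F)"
      unfolding zero_def_hypergraph_def using zero_definable_definable by blast+
    with e show "\<exists>d' W F f. hypergraph k W F \<and> W \<subseteq> {xs. length xs = d'} \<and> definable RN (d' * k) (concat ` F) \<and>
        hg_embedding k f V E W F" by blast
  qed
qed

end
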